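(* Let $\mathcal{H}_S$ (system) and $\mathcal{H}_B$ (bath) be Hilbert spaces (with all traces below finite, e.g. finite-dimensional). Let $H_S(s)$, $s\in[0,t]$, be a (possibly time-dependent) self-adjoint system Hamiltonian, $H_B$ a time-independent self-adjoint bath Hamiltonian, and $U_t$ any unitary on $\mathcal{H}_S\otimes\mathcal{H}_B$ (the evolution generated by $H_{\rm tot}(s)=H_S(s)\otimes\mathbb{1}_B+\mathbb{1}_S\otimes H_B+V(s)$ with an arbitrary interaction $V$). Fix $\beta>0$ and set $Z_S(s)={\rm Tr}[e^{-\beta H_S(s)}]$, $\tau_S(s)=e^{-\beta H_S(s)}/Z_S(s)$, $Z_B={\rm Tr}[e^{-\beta H_B}]$, $\tau_B=e^{-\beta H_B}/Z_B$, and $F_S(s)=-\beta^{-1}\ln Z_S(s)$, $\Delta F_S=F_S(t)-F_S(0)$. Let $\{|\epsilon\rangle\}$ be an orthonormal eigenbasis of $H_S(0)$, with $|\epsilon\rangle$ having eigenvalue $\epsilon$ (sums over $\epsilon$ run over this basis). Define the CPTP map $\Phi_t(\rho)={\rm Tr}_B[U_t(\rho\otimes\tau_B)U_t^\dagger]$, the trajectory energy change $\Delta\tilde E(\epsilon)={\rm Tr}[H_S(t)\Phi_t(|\epsilon\rangle\langle\epsilon|)]-\epsilon$, $\tilde Z_S(t)=\sum_\epsilon e^{-\beta{\rm Tr}[H_S(t)\Phi_t(|\epsilon\rangle\langle\epsilon|)]}$, the guessed state $$\Theta_{SB}(t)=\sum_\epsilon \frac{e^{-\beta{\rm Tr}[H_S(t)\Phi_t(|\epsilon\rangle\langle\epsilon|)]}}{\tilde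 Z_S(t)}\,U_t(|\epsilon\rangle\langle\epsilon|\otimes\tau_B)U_t^\dagger,$$ the guessed quantum heat $\langle\tilde Q\rangle_B={\rm Tr}[H_B\tau_B]-{\rm Tr}[(\mathbb{1}_S\otimes H_B)\Theta_{SB}(t)]$, and for each $\epsilon$ the guessed quantum work $\tilde W(\epsilon)=\Delta\tilde E(\epsilon)-\langle\tilde Q\rangle_B$. Writing $\langle f\rangle_{\tilde P}=\sum_\epsilon \frac{e^{-\beta\epsilon}}{Z_S(0)} f(\epsilon)$, one has $$\langle e^{-\beta\tilde W}\rangle_{\tilde P}=e^{-\beta\Delta F_S}\,e^{-D[\Theta_{SB}(t)\|\tau_S(t)\otimes\tau_B]},$$ where $D[\rho\|\sigma]={\rm Tr}[\rho\ln\rho]-{\rm Tr}[\rho\ln\sigma]$ is the quantum relative entropy.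
   Context: Physical interpretation: the system starts in $\tau_S(0)$ and the bath in $\tau_B$; an initial projective energy measurement of the system yields $\epsilon$ with probability $e^{-\beta\epsilon}/Z_S(0)$, after which the joint state $|\epsilon\rangle\langle\epsilon|\otimes\tau_B$ evolves under $U_t$. The average $\langle\cdot\rangle_{\tilde P}$ is with respect to the distribution $\tilde P(\Delta E)=\sum_\epsilon \frac{e^{-\beta\epsilon}}{Z_S(0)}\delta(\Delta E-\Delta\tilde E(\epsilon))$. The quantity $\langle\tilde Q\rangle_B$ is a constant (independent of $\epsilon$). *)

theory Defs
  imports "HOL-Analysis.Analysis"
begin

text \<open>Finite-dimensional quantum mechanics: a Hilbert space of dimension CARD('n) is
  modelled as complex^'n, operators as complex^'n^'n (HOL-Analysis matrices).
  The composite system S+B has index type 's \<times> 'b.\<close>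

definition cinner :: "complex^'n \<Rightarrow> complex^'n \<Rightarrow> complex" where
  "cinner x y = (\<Sum>i\<in>UNIV. cnj (x$i) * y$i)"

definition adjoint_mat :: "complex^'n^'m \<Rightarrow> complex^'m^'n" where
  "adjoint_mat A = (\<chi> i j. cnj (A$j$i))"

definition hermitian :: "complex^'n^'n \<Rightarrow> bool" where
  "hermitian A \<longleftrightarrow> adjoint_mat A = A"

definition unitary_mat :: "complex^'n^'n \<Rightarrow> bool" where
  "unitary_mat U \<longleftrightarrow> adjoint_mat U ** U = mat 1 \<and> U ** adjoint_mat U = mat 1"

definition ketbra :: "complex^'n \<Rightarrow> complex^'n \<Rightarrow> complex^'n^'n" where
  "ketbra x y = (\<chi> i j. x$i * cnj (y$j))"

definition orthonormal_family :: "('n \<Rightarrow> complex^'n) \<Rightarrow> bool" where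
  "orthonormal_family v \<longleftrightarrow> (\<forall>i j. cinner (v i) (v j) = (if i = j then 1 else 0))"

definition eigen_decomp :: "complex^'n^'n \<Rightarrow> ('n \<Rightarrow> complex^'n) \<Rightarrow> ('n \<Rightarrow> real) \<Rightarrow> bool" where
  "eigen_decomp A v l \<longleftrightarrow> orthonormal_family v \<and> (\<forall>i. A *v v i = complex_of_real (l i) *s v i)"

definition mat_fun :: "(real \<Rightarrow> real) \<Rightarrow> complex^'n^'n \<Rightarrow> complex^'n^'n" where
  "mat_fun f A = (let (v, l) = (SOME (v, l). eigen_decomp A v l)
                  in (\<chi> a b. \<Sum>i\<in>UNIV. complex_of_real (f (l i)) * v i $ a * cnj (v i $ b)))"

definition mat_exp :: "complex^'n^'n \<Rightarrow> complex^'n^'n" where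
  "mat_exp A = mat_fun exp A"

text \<open>Matrix logarithm; real ln has ln 0 = 0, giving the convention 0 ln 0 = 0.\<close>
definition mat_ln :: "complex^'n^'n \<Rightarrow> complex^'n^'n" where
  "mat_ln A = mat_fun ln A"

definition kron :: "complex^'n^'n \<Rightarrow> complex^'m::finite^'m \<Rightarrow> complex^('n \<times> 'm)^('n \<times> 'm)" where
  "kron A B = (\<chi> p q. A $ fst p $ fst q * B $ snd p $ snd q)"

definition ptrace_B :: "complex^('n \<times> 'm::finite)^('n \<times> 'm) \<Rightarrow> complex^'n^'n" where
  "ptrace_B R = (\<chi> i j. \<Sum>k\<in>UNIV. R $ (i, k) $ (j, k))"

definition partition_fn :: "real \<Rightarrow> complex^'n^'n \<Rightarrow> real" where
  "partition_fn \<beta> H = Re (trace (mat_exp ((- \<beta>) *\<^sub>R H)))"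

definition gibbs :: "real \<Rightarrow> complex^'n^'n \<Rightarrow> complex^'n^'n" where
  "gibbs \<beta> H = (1 / partition_fn \<beta> H) *\<^sub>R mat_exp ((- \<beta>) *\<^sub>R H)"

definition free_energy :: "real \<Rightarrow> complex^'n^'n \<Rightarrow> real" where
  "free_energy \<beta> H = - ln (partition_fn \<beta> H) / \<beta>"

definition rel_entropy :: "complex^'n^'n \<Rightarrow> complex^'n^'n \<Rightarrow> real" where
  "rel_entropy \<rho> \<sigma> = Re (trace (\<rho> ** mat_ln \<rho>)) - Re (trace (\<rho> ** mat_ln \<sigma>))"

definition channel :: "complex^('s::finite \<times> 'b::finite)^('s \<times> 'b) \<Rightarrow> complex^'b^'b \<Rightarrow> complex^'s^'s \<Rightarrow> complex^'s^'s" where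
  "channel U \<tau>B \<rho> = ptrace_B (U ** kron \<rho> \<tau>B ** adjoint_mat U)"

end

theory Submission
  imports Defs
begin


lemma scaleR_cpx: "r *\<^sub>R (z::complex) = complex_of_real r * z"
  by (simp add: scaleR_conv_of_real)

lemma cinner_sym: "cinner y x = cnj (cinner x y)"
  by (simp add: cinner_def mult.commute)

lemma cinner_add_right: "cinner x (y + z) = cinner x y + cinner x z"
  by (simp add: cinner_def distrib_left sum.distrib)
lemma cinner_add_left: "cinner (x + y) z = cinner x z + cinner y z"
  by (simp add: cinner_def distrib_right sum.distrib)
lemma cinner_diff_right: "cinner x (y - z) = cinner x y - cinner x z"
  by (simp add: cinner_def right_diff_distrib sum_subtractf)
lemma cinner_diff_left: "cinner (x - y) z = cinner x z - cinner y z"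
  by (simp add: cinner_def left_diff_distrib sum_subtractf)
lemma cinner_smult_right: "cinner x (c *s y) = c * cinner x y"
  by (simp add: cinner_def sum_distrib_left ac_simps)
lemma cinner_smult_left: "cinner (c *s x) y = cnj c * cinner x y"
  by (simp add: cinner_def sum_distrib_left ac_simps)
lemma cinner_scaleR_right: "cinner x (r *\<^sub>R y) = of_real r * cinner x y"
  by (simp add: cinner_def sum_distrib_left ac_simps scaleR_cpx)
lemma cinner_scaleR_left: "cinner (r *\<^sub>R x) y = of_real r * cinner x y"
  by (simp add: cinner_def sum_distrib_left ac_simps scaleR_cpx)
lemma cinner_sum_right: "cinner x (\<Sum>i\<in>S. f i) = (\<Sum>i\<in>S. cinner x (f i))"
  by (simp add: cinner_def sum_distrib_left sum_component) (rule sum.swap)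
lemma cinner_sum_left: "cinner (\<Sum>i\<in>S. f i) y = (\<Sum>i\<in>S. cinner (f i) y)"
  by (simp add: cinner_def sum_distrib_right sum_component) (rule sum.swap)
lemma cinner_zero_right[simp]: "cinner x 0 = 0" by (simp add: cinner_def)
lemma cinner_zero_left[simp]: "cinner 0 x = 0" by (simp add: cinner_def)

lemma cinner_adj: "cinner (A *v x) y = cinner x (adjoint_mat A *v y)"
  by (simp add: cinner_def adjoint_mat_def matrix_vector_mult_def sum_distrib_left
      sum_distrib_right ac_simps) (subst sum.swap, simp add: ac_simps)

lemma ketbra_mv: "ketbra x y *v z = cinner y z *s x"
  by (simp add: vec_eq_iff ketbra_def cinner_def matrix_vector_mult_def sum_distrib_left ac_simps)

lemma mm_ketbra: "M ** ketbra x y = ketbra (M *v x) y"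
  by (simp add: vec_eq_iff ketbra_def matrix_matrix_mult_def matrix_vector_mult_def
      sum_distrib_right sum_distrib_left ac_simps)

lemma trace_ketbra: "trace (M ** ketbra x y) = cinner y (M *v x)"
  unfolding mm_ketbra by (simp add: trace_def ketbra_def cinner_def ac_simps)

lemma mv_sum: "(\<Sum>i\<in>S. A i) *v x = (\<Sum>i\<in>S. A i *v x)"
  by (induction S rule: infinite_finite_induct) (auto simp: matrix_vector_mult_add_rdistrib)

lemma mm_sum_right: "M ** (\<Sum>i\<in>S. A i) = (\<Sum>i\<in>S. M ** A i)"
  by (induction S rule: infinite_finite_induct) (auto simp: matrix_add_ldistrib)

lemma matrix_add_rdistrib: "((B + C) ** A) = (B ** A) + (C ** A)"
  by (vector matrix_matrix_mult_def sum.distrib[symmetric] field_simps)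

lemma mm_sum_left: "(\<Sum>i\<in>S. A i) ** M = (\<Sum>i\<in>S. A i ** M)"
  by (induction S rule: infinite_finite_induct) (auto simp: matrix_add_rdistrib)

lemma mv_scaleR_mat: "(r *\<^sub>R (A::complex^'n^'m)) *v x = r *\<^sub>R (A *v x)"
  by (simp add: vec_eq_iff matrix_vector_mult_def sum_distrib_left scaleR_cpx ac_simps)

lemma mm_scaleR_left: "(r *\<^sub>R (A::complex^'n^'m)) ** B = r *\<^sub>R (A ** B)"
  by (simp add: vec_eq_iff matrix_matrix_mult_def sum_distrib_left scaleR_cpx ac_simps)
lemma mm_scaleR_right: "(A::complex^'n^'m) ** (r *\<^sub>R B) = r *\<^sub>R (A ** B)"
  by (simp add: vec_eq_iff matrix_matrix_mult_def sum_distrib_left scaleR_cpx ac_simps)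

lemma trace_scaleR: "trace (r *\<^sub>R (A::complex^'n^'n)) = r *\<^sub>R trace A"
  by (simp add: trace_def scaleR_sum_right)
lemma trace_sum: "trace (\<Sum>i\<in>S. (A i::complex^'n^'n)) = (\<Sum>i\<in>S. trace (A i))"
  by (induction S rule: infinite_finite_induct) (auto simp: trace_add trace_0[unfolded mat_0])

definition specv :: "('i::finite \<Rightarrow> real) \<Rightarrow> ('i \<Rightarrow> complex^'n) \<Rightarrow> complex^'n^'n" where
  "specv c v = (\<Sum>i\<in>UNIV. c i *\<^sub>R ketbra (v i) (v i))"

lemma mat_fun_unfold:
  "(\<chi> a b. \<Sum>i\<in>UNIV. complex_of_real (f (l i)) * v i $ a * cnj (v i $ b)) = specv (\<lambda>i. f (l i)) v"
  by (simp add: vec_eq_iff specv_def sum_component ketbra_def scaleR_cpx mult.assoc)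

lemma ketbra_scaleR: "ketbra (r *\<^sub>R x) y = r *\<^sub>R ketbra x y"
  by (simp add: vec_eq_iff ketbra_def scaleR_cpx mult.assoc)
lemma ketbra_ofreal: "ketbra (complex_of_real r *s x) y = r *\<^sub>R ketbra x y"
  by (simp add: vec_eq_iff ketbra_def scaleR_cpx mult.assoc)
lemma smult_ofreal: "complex_of_real r *s x = r *\<^sub>R x"
  by (simp add: vec_eq_iff scaleR_cpx)

lemma orth_complete:
  fixes v :: "'n::finite \<Rightarrow> complex^'n"
  assumes "orthonormal_family v"
  shows "(\<Sum>i\<in>UNIV. ketbra (v i) (v i)) = mat 1"
proof -
  define V :: "complex^'n^'n" where "V = (\<chi> a i. v i $ a)"
  have "adjoint_mat V ** V = mat 1"
    using assms unfolding orthonormal_family_def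
    by (simp add: vec_eq_iff V_def adjoint_mat_def matrix_matrix_mult_def mat_def cinner_def)
  then have "V ** adjoint_mat V = mat 1"
    using matrix_left_right_inverse by blast
  then show ?thesis
    by (simp add: vec_eq_iff V_def adjoint_mat_def matrix_matrix_mult_def sum_component ketbra_def)
qed

lemma orth_expand:
  fixes v :: "'n::finite \<Rightarrow> complex^'n"
  assumes "orthonormal_family v"
  shows "(\<Sum>i\<in>UNIV. cinner (v i) x *s v i) = x"
proof -
  have "x = (\<Sum>i\<in>UNIV. ketbra (v i) (v i)) *v x" using orth_complete[OF assms] by simp
  also have "\<dots> = (\<Sum>i\<in>UNIV. cinner (v i) x *s v i)" by (simp add: mv_sum ketbra_mv)
  finally show ?thesis by simp
qed

lemma specv_mv:
  fixes v :: "'n::finite \<Rightarrow> complex^'n"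
  assumes "orthonormal_family v"
  shows "specv c v *v v j = c j *\<^sub>R v j"
proof -
  have "specv c v *v v j = (\<Sum>i\<in>UNIV. c i *\<^sub>R (cinner (v i) (v j) *s v i))"
    by (simp add: specv_def mv_sum mv_scaleR_mat ketbra_mv)
  also have "\<dots> = (\<Sum>i\<in>UNIV. if i = j then c j *\<^sub>R v j else 0)"
    using assms unfolding orthonormal_family_def by (intro sum.cong) auto
  finally show ?thesis by simp
qed

lemma spectral_sum:
  fixes v :: "'n::finite \<Rightarrow> complex^'n"
  assumes "eigen_decomp A v l"
  shows "A = specv l v"
proof -
  have o: "orthonormal_family v" and ev: "\<And>i. A *v v i = complex_of_real (l i) *s v i"
    using assms unfolding eigen_decomp_def by auto
  have "A = A ** mat 1" by simp
  also have "\<dots> = (\<Sum>i\<in>UNIV. A ** ketbra (v i) (v i))"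
    by (simp add: orth_complete[OF o, symmetric] mm_sum_right)
  also have "\<dots> = specv l v"
    by (simp add: specv_def mm_ketbra ev ketbra_ofreal)
  finally show ?thesis .
qed

lemma specv_unique:
  fixes v w :: "'n::finite \<Rightarrow> complex^'n"
  assumes ev: "eigen_decomp A v l" and ew: "eigen_decomp A w m"
  shows "specv (\<lambda>i. f (l i)) v = specv (\<lambda>i. f (m i)) w"
proof -
  have ov: "orthonormal_family v" and ow: "orthonormal_family w"
    and evw: "\<And>i. A *v w i = complex_of_real (m i) *s w i"
    using ev ew unfolding eigen_decomp_def by auto
  define M where "M = specv (\<lambda>i. f (l i)) v"
  have key: "f (l i) * cinner (v i) (w j) = f (m j) * cinner (v i) (w j)" for i j
  proof -
    have "cinner (v i) (A *v w j) = m j * cinner (v i) (w j)"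
      by (simp add: evw cinner_smult_right)
    moreover have "cinner (v i) (A *v w j) = l i * cinner (v i) (w j)"
    proof -
      have "cinner (v i) (A *v w j) = cinner (v i) (specv l v *v w j)"
        using spectral_sum[OF ev] by simp
      also have "\<dots> = (\<Sum>k\<in>UNIV. l k * cinner (v k) (w j) * cinner (v i) (v k))"
        by (simp add: specv_def mv_sum mv_scaleR_mat ketbra_mv cinner_sum_right
            cinner_scaleR_right cinner_smult_right ac_simps)
      also have "\<dots> = (\<Sum>k\<in>UNIV. if k = i then l i * cinner (v i) (w j) else 0)"
        using ov unfolding orthonormal_family_def by (intro sum.cong) auto
      finally show ?thesis by simp
    qed
    ultimately have "(complex_of_real (l i) - complex_of_real (m j)) * cinner (v i) (w j) = 0"
      by (simp add: algebra_simps)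
    then have "l i = m j \<or> cinner (v i) (w j) = 0" by auto
    then show ?thesis by auto
  qed
  have Mw: "M *v w j = f (m j) *\<^sub>R w j" for j
  proof -
    have "M *v w j = (\<Sum>i\<in>UNIV. (complex_of_real (f (l i)) * cinner (v i) (w j)) *s v i)"
      by (simp add: M_def specv_def mv_sum mv_scaleR_mat ketbra_mv smult_ofreal[symmetric]
          vector_smult_assoc)
    also have "\<dots> = (\<Sum>i\<in>UNIV. complex_of_real (f (m j)) *s (cinner (v i) (w j) *s v i))"
      by (simp add: vector_smult_assoc) (intro sum.cong refl, metis key)
    also have "\<dots> = complex_of_real (f (m j)) *s (\<Sum>i\<in>UNIV. cinner (v i) (w j) *s v i)"
      by (simp add: vec.scale_sum_right)
    also have "\<dots> = complex_of_real (f (m j)) *s w j"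
      by (simp only: orth_expand[OF ov])
    finally show ?thesis by (simp add: smult_ofreal)
  qed
  have "M = M ** mat 1" by simp
  also have "\<dots> = (\<Sum>i\<in>UNIV. M ** ketbra (w i) (w i))"
    by (simp add: orth_complete[OF ow, symmetric] mm_sum_right)
  also have "\<dots> = specv (\<lambda>i. f (m i)) w"
    by (simp add: specv_def mm_ketbra Mw ketbra_scaleR)
  finally show ?thesis unfolding M_def .
qed

lemma mat_fun_eq:
  fixes v :: "'n::finite \<Rightarrow> complex^'n"
  assumes ev: "eigen_decomp A v l"
  shows "mat_fun f A = specv (\<lambda>i. f (l i)) v"
proof -
  obtain v' l' where vl: "(SOME (v, l). eigen_decomp A v l) = (v', l')" by (cases "SOME (v, l). eigen_decomp A v l")
  have "\<exists>p. (case p of (v, l) \<Rightarrow> eigen_decomp A v l)" using ev by auto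
  then have "(case (SOME p. (case p of (v, l) \<Rightarrow> eigen_decomp A v l)) of (v, l) \<Rightarrow> eigen_decomp A v l)"
    by (rule someI_ex)
  then have ev': "eigen_decomp A v' l'" using vl by simp
  have "mat_fun f A = specv (\<lambda>i. f (l' i)) v'"
    unfolding mat_fun_def vl by (simp add: mat_fun_unfold)
  also have "\<dots> = specv (\<lambda>i. f (l i)) v" by (rule specv_unique[OF ev' ev])
  finally show ?thesis .
qed

lemma cinner_self_norm: "cinner x x = complex_of_real ((norm x)^2)"
proof -
  have "(norm x)^2 = (\<Sum>i\<in>UNIV. (norm (x$i))^2)"
    unfolding norm_vec_def L2_set_def by (simp add: sum_nonneg)
  then have "complex_of_real ((norm x)^2) = (\<Sum>i\<in>UNIV. complex_of_real ((norm (x$i))^2))"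
    by simp
  also have "\<dots> = cinner x x"
    unfolding cinner_def complex_norm_square by (simp add: mult.commute)
  finally show ?thesis by simp
qed

lemma mv_smult: "(A::complex^'n^'m) *v (c *s x) = c *s (A *v x)"
  by (simp add: vec_eq_iff matrix_vector_mult_def sum_distrib_left ac_simps)
lemma mv_scaleR: "(A::complex^'n^'m) *v (r *\<^sub>R x) = r *\<^sub>R (A *v x)"
  using mv_smult[of A "complex_of_real r" x] by (simp add: smult_ofreal)

lemma herm_cinner: "hermitian A \<Longrightarrow> cinner (A *v x) y = cinner x (A *v y)"
  by (simp add: cinner_adj hermitian_def)

lemma real_of_cnj: "cnj z = z \<Longrightarrow> z = complex_of_real (Re z)"
  by (simp add: complex_eq_iff)

lemma herm_real: "hermitian A \<Longrightarrow> cinner x (A *v x) = complex_of_real (Re (cinner x (A *v x)))"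
  by (rule real_of_cnj) (metis herm_cinner cinner_sym)

lemma cont_cinner: "continuous_on X (\<lambda>x. cinner w x)"
  unfolding cinner_def by (intro continuous_intros)

lemma cont_quad: "continuous_on X (\<lambda>x. Re (cinner x ((A::complex^'n^'n) *v x)))"
  unfolding cinner_def by (intro continuous_intros)



lemma eig_in_sub:
  fixes A :: "complex^'n::finite^'n" and v :: "'n \<Rightarrow> complex^'n"
  assumes herm: "hermitian A"
    and S_def: "S = {x. \<forall>j\<in>T. cinner (v j) x = 0}"
    and inv: "\<And>x. x \<in> S \<Longrightarrow> A *v x \<in> S"
    and x1S: "x1 \<in> S" and x1nz: "x1 \<noteq> 0"
  shows "\<exists>u\<in>S. cinner u u = 1 \<and> (\<exists>c::real. A *v u = complex_of_real c *s u)"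
proof -
  have closedS: "closed S"
  proof -
    have "S = (\<Inter>j\<in>T. {x. cinner (v j) x = 0})" using S_def by auto
    moreover have "closed {x. cinner (v j) x = 0}" for j
      by (rule closed_Collect_eq) (auto intro: cont_cinner continuous_intros)
    ultimately show ?thesis by auto
  qed
  have S_add: "x + y \<in> S" if "x \<in> S" "y \<in> S" for x y
    using that by (simp add: S_def cinner_add_right)
  have S_diff: "x - y \<in> S" if "x \<in> S" "y \<in> S" for x y
    using that by (simp add: S_def cinner_diff_right)
  have S_scale: "r *\<^sub>R x \<in> S" if "x \<in> S" for x r
    using that by (simp add: S_def cinner_scaleR_right)
  have S_smult: "c *s x \<in> S" if "x \<in> S" for x c
    using that by (simp add: S_def cinner_smult_right)
  define K where "K = S \<inter> sphere 0 1"
  have cK: "compact K" unfolding K_def using closedS by (intro closed_Int_compact) auto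
  have "(1 / norm x1) *\<^sub>R x1 \<in> K"
    using x1S x1nz S_scale by (simp add: K_def)
  then have neK: "K \<noteq> {}" by auto
  define f where "f = (\<lambda>x. Re (cinner x (A *v x)))"
  have cf: "continuous_on K f" unfolding f_def by (rule cont_quad)
  obtain x0 where x0K: "x0 \<in> K" and x0max: "\<And>y. y \<in> K \<Longrightarrow> f y \<le> f x0"
    using continuous_attains_sup[OF cK neK cf] by blast
  define c where "c = f x0"
  have x0S: "x0 \<in> S" and nx0: "norm x0 = 1" using x0K by (auto simp: K_def)
  have f_scale: "f (r *\<^sub>R z) = r^2 * f z" for r z
    by (simp add: f_def mv_scaleR cinner_scaleR_left cinner_scaleR_right power2_eq_square)
  have bound: "f z \<le> c * (norm z)^2" if "z \<in> S" for z
  proof (cases "z = 0")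
    case True then show ?thesis by (simp add: f_def)
  next
    case False
    then have nz: "norm z > 0" by simp
    have "(1 / norm z) *\<^sub>R z \<in> K" using that S_scale False by (simp add: K_def)
    then have "f ((1 / norm z) *\<^sub>R z) \<le> c" using x0max c_def by blast
    then have "(1 / norm z)^2 * f z \<le> c" by (simp add: f_scale)
    then have "f z / (norm z)^2 \<le> c" by (simp add: power_divide)
    then show ?thesis using nz by (simp add: divide_le_eq mult.commute)
  qed
  have cx0: "cinner x0 x0 = 1" using nx0 by (simp add: cinner_self_norm)
  have hx: "cinner x0 (A *v x0) = complex_of_real c"
    using herm_real[OF herm, of x0] by (simp add: c_def f_def)
  define y where "y = A *v x0 - complex_of_real c *s x0"
  have yS: "y \<in> S" unfolding y_def using x0S inv S_diff S_smult by blast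
  have c1: "cinner x0 y = 0" by (simp add: y_def cinner_diff_right cinner_smult_right hx cx0)
  have c2: "cinner y x0 = 0" using c1 cinner_sym[of y x0] by simp
  have Ax0: "A *v x0 = y + complex_of_real c *s x0" by (simp add: y_def)
  have c3: "cinner y (A *v x0) = cinner y y"
    by (simp add: Ax0 cinner_add_right cinner_smult_right c2)
  have yy: "cinner y y = complex_of_real ((norm y)^2)" by (rule cinner_self_norm)
  have c4: "cinner x0 (A *v y) = cinner y y"
  proof -
    have "cinner x0 (A *v y) = cinner (A *v x0) y" using herm_cinner[OF herm] by simp
    also have "\<dots> = cnj (cinner y (A *v x0))" by (rule cinner_sym)
    also have "\<dots> = cinner y y" using c3 yy by simp
    finally show ?thesis .
  qed
  define N where "N = (norm y)^2"
  define a where "a = f y"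
  have expand: "c + 2 * t * N + t^2 * a \<le> c * (1 + t^2 * N)" for t
  proof -
    have zS: "x0 + t *\<^sub>R y \<in> S" using x0S yS S_add S_scale by blast
    have "cinner (x0 + t *\<^sub>R y) (A *v (x0 + t *\<^sub>R y)) =
          cinner x0 (A *v x0) + of_real t * cinner x0 (A *v y) + of_real t * cinner y (A *v x0)
          + of_real t * of_real t * cinner y (A *v y)"
      by (simp add: matrix_vector_right_distrib mv_scaleR cinner_add_left cinner_add_right
          cinner_scaleR_left cinner_scaleR_right algebra_simps)
    then have e1: "f (x0 + t *\<^sub>R y) = c + 2 * t * N + t^2 * a"
      by (simp add: f_def hx c3 c4 yy N_def a_def power2_eq_square)
    have "cinner (x0 + t *\<^sub>R y) (x0 + t *\<^sub>R y) =
          cinner x0 x0 + of_real t * cinner x0 y + of_real t * cinner y x0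
          + of_real t * of_real t * cinner y y"
      by (simp add: cinner_add_left cinner_add_right
          cinner_scaleR_left cinner_scaleR_right algebra_simps)
    then have "cinner (x0 + t *\<^sub>R y) (x0 + t *\<^sub>R y) = complex_of_real (1 + t^2 * N)"
      by (simp add: cx0 c1 c2 yy N_def power2_eq_square)
    then have "complex_of_real ((norm (x0 + t *\<^sub>R y))^2) = complex_of_real (1 + t^2 * N)"
      using cinner_self_norm[of "x0 + t *\<^sub>R y"] by simp
    then have e2: "(norm (x0 + t *\<^sub>R y))^2 = 1 + t^2 * N"
      by (simp only: of_real_eq_iff)
    show ?thesis using bound[OF zS] e1 e2 by simp
  qed
  have N0: "N \<le> 0"
  proof (rule ccontr)
    assume "\<not> N \<le> 0"
    then have Np: "N > 0" by simp
    define K' where "K' = \<bar>c * N - a\<bar> + 1"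
    have K'p: "K' > 0" by (simp add: K'_def)
    define t where "t = N / K'"
    have tp: "t > 0" using Np K'p by (simp add: t_def)
    have tK: "t * K' = N" using K'p by (simp add: t_def)
    have "t * (2 * N) \<le> t * (t * (c * N - a))"
      using expand[of t] by (simp add: algebra_simps power2_eq_square)
    then have "2 * N \<le> t * (c * N - a)" using tp by simp
    also have "\<dots> \<le> t * K'" using tp by (intro mult_left_mono) (auto simp: K'_def)
    finally show False using tK Np by simp
  qed
  then have "y = 0" by (simp add: N_def)
  then have "A *v x0 = complex_of_real c *s x0" by (simp add: Ax0)
  then show ?thesis using x0S cx0 by blast
qed

lemma exists_orth:
  fixes v :: "'n::finite \<Rightarrow> complex^'n"
  assumes aT: "a \<notin> T"
  shows "\<exists>x. x \<noteq> 0 \<and> (\<forall>j\<in>T. cinner (v j) x = 0)"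
proof (rule ccontr)
  assume H: "\<not> (\<exists>x. x \<noteq> 0 \<and> (\<forall>j\<in>T. cinner (v j) x = 0))"
  define M :: "complex^'n^'n" where "M = (\<chi> j k. if j \<in> T then cnj (v j $ k) else 0)"
  have Mx: "(M *v x) $ j = (if j \<in> T then cinner (v j) x else 0)" for x j
    by (simp add: M_def matrix_vector_mult_def cinner_def)
  have "\<forall>x. M *v x = 0 \<longrightarrow> x = 0"
  proof (intro allI impI)
    fix x assume "M *v x = 0"
    then have "(M *v x) $ j = 0" for j by simp
    then have "\<forall>j\<in>T. cinner (v j) x = 0" using Mx by (metis (full_types))
    then show "x = 0" using H by blast
  qed
  then obtain B where "B ** M = mat 1" using matrix_left_invertible_ker by blast
  then have MB: "M ** B = mat 1" using matrix_left_right_inverse by blast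
  have "(M ** B) $ a $ a = 0" by (simp add: matrix_matrix_mult_def M_def aT)
  moreover have "(M ** B) $ a $ a = 1" by (simp add: MB mat_def)
  ultimately show False by simp
qed

lemma spectral_exists:
  fixes A :: "complex^'n::finite^'n"
  assumes herm: "hermitian A"
  shows "\<exists>v l. eigen_decomp A v l"
proof -
  have "\<exists>v l. (\<forall>i\<in>T. \<forall>j\<in>T. cinner (v i) (v j) = (if i = j then 1 else 0)) \<and>
          (\<forall>i\<in>T. A *v v i = complex_of_real (l i) *s v i)" for T :: "'n set"
  proof -
    have "finite T" by simp
    then show ?thesis
    proof (induction T rule: finite_induct)
      case empty
      then show ?case by auto
    next
      case (insert a T)
      obtain v l where orth: "\<forall>i\<in>T. \<forall>j\<in>T. cinner (v i) (v j) = (if i = j then 1 else 0)"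
        and eig: "\<forall>i\<in>T. A *v v i = complex_of_real (l i) *s v i"
        using insert.IH by blast
      define S where "S = {x. \<forall>j\<in>T. cinner (v j) x = 0}"
      obtain x1 where x1: "x1 \<noteq> 0" "\<forall>j\<in>T. cinner (v j) x1 = 0"
        using exists_orth[OF insert.hyps(2)] by blast
      have inv: "A *v x \<in> S" if "x \<in> S" for x
      proof -
        have "cinner (v j) (A *v x) = 0" if "j \<in> T" for j
        proof -
          have "cinner (v j) (A *v x) = cinner (A *v v j) x" using herm_cinner[OF herm] by simp
          also have "\<dots> = 0" using eig that \<open>x \<in> S\<close> by (simp add: S_def cinner_smult_left)
          finally show ?thesis .
        qed
        then show ?thesis by (simp add: S_def)
      qed
      obtain u c where uS: "u \<in> S" and uu: "cinner u u = 1" and uc: "A *v u = complex_of_real c *s u"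
        using eig_in_sub[OF herm S_def inv _ x1(1)] x1(2) by (auto simp: S_def)
      have uo: "cinner (v j) u = 0" "cinner u (v j) = 0" if "j \<in> T" for j
        using uS that cinner_sym[of u "v j"] by (auto simp: S_def)
      have aT: "a \<notin> T" by (rule insert.hyps(2))
      show ?case
      proof (intro exI[of _ "v(a := u)"] exI[of _ "l(a := c)"] conjI ballI)
        fix i j assume i: "i \<in> insert a T" and j: "j \<in> insert a T"
        show "cinner ((v(a := u)) i) ((v(a := u)) j) = (if i = j then 1 else 0)"
        proof (cases "i = a")
          case True
          then show ?thesis
          proof (cases "j = a")
            case True
            then show ?thesis using \<open>i = a\<close> uu by simp
          next
            case False
            then have "j \<in> T" using j by simp
            then show ?thesis using \<open>i = a\<close> False uo(2) by simp
          qed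
        next
          case False
          then have iT: "i \<in> T" using i by simp
          show ?thesis
          proof (cases "j = a")
            case True
            then show ?thesis using False iT uo(1) by simp
          next
            case False
            then have "j \<in> T" using j by simp
            then show ?thesis using \<open>i \<noteq> a\<close> False iT orth by simp
          qed
        qed
      next
        fix i assume i: "i \<in> insert a T"
        show "A *v (v(a := u)) i = complex_of_real ((l(a := c)) i) *s (v(a := u)) i"
        proof (cases "i = a")
          case True
          then show ?thesis using uc by simp
        next
          case False
          then show ?thesis using i eig by simp
        qed
      qed
    qed
  qed
  from this[of UNIV] show ?thesis unfolding eigen_decomp_def orthonormal_family_def by auto
qed



definition tv :: "complex^'a \<Rightarrow> complex^'b \<Rightarrow> complex^('a::finite \<times> 'b::finite)" where
  "tv x y = (\<chi> p. x $ fst p * y $ snd p)"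

lemma sum_UNIV_prod: "(\<Sum>p\<in>(UNIV::('a::finite\<times>'b::finite) set). f p) = (\<Sum>a\<in>UNIV. \<Sum>b\<in>UNIV. f (a, b))"
proof -
  have "(\<Sum>a\<in>UNIV. \<Sum>b\<in>UNIV. f (a, b)) = (\<Sum>p\<in>UNIV \<times> UNIV. f p)"
    by (simp add: sum.cartesian_product)
  then show ?thesis by simp
qed

lemma kron_tv: "kron A B *v tv x y = tv (A *v x) (B *v y)"
  by (simp add: vec_eq_iff kron_def tv_def matrix_vector_mult_def sum_UNIV_prod sum_product ac_simps)

lemma cinner_tv: "cinner (tv x y) (tv x' y') = cinner x x' * cinner y y'"
  by (simp add: cinner_def tv_def sum_UNIV_prod sum_product ac_simps)

lemma tv_scaleR_right: "tv x (r *\<^sub>R y) = r *\<^sub>R tv x y"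
  by (simp add: vec_eq_iff tv_def scaleR_cpx ac_simps)
lemma tv_scaleR_left: "tv (r *\<^sub>R x) y = r *\<^sub>R tv x y"
  by (simp add: vec_eq_iff tv_def scaleR_cpx ac_simps)
lemma tv_smult_left: "tv (c *s x) y = c *s tv x y"
  by (simp add: vec_eq_iff tv_def ac_simps)
lemma tv_smult_right: "tv x (c *s y) = c *s tv x y"
  by (simp add: vec_eq_iff tv_def ac_simps)

lemma orth_tv:
  assumes "orthonormal_family v" "orthonormal_family w"
  shows "orthonormal_family (\<lambda>p. tv (v (fst p)) (w (snd p)))"
  using assms unfolding orthonormal_family_def by (auto simp: cinner_tv prod_eq_iff)

lemma trace_kron: "trace (kron A B) = trace A * trace B"
  by (simp add: trace_def kron_def sum_UNIV_prod sum_product)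

lemma trace_ptrace: "trace (R ** kron A (mat 1)) = trace (A ** ptrace_B R)"
proof -
  have "trace (R ** kron A (mat 1)) = (\<Sum>a\<in>UNIV. \<Sum>k\<in>UNIV. \<Sum>b\<in>UNIV. R $ (a, k) $ (b, k) * A $ b $ a)"
    by (simp add: trace_def matrix_matrix_mult_def kron_def sum_UNIV_prod mat_def if_distrib if_distribR
        sum.delta cong: if_cong)
  also have "\<dots> = (\<Sum>a\<in>UNIV. \<Sum>b\<in>UNIV. \<Sum>k\<in>UNIV. R $ (a, k) $ (b, k) * A $ b $ a)"
    by (intro sum.cong refl) (rule sum.swap)
  also have "\<dots> = trace (A ** ptrace_B R)"
    by (simp add: trace_def matrix_matrix_mult_def ptrace_B_def sum_distrib_left sum_distrib_right ac_simps)
      (rule sum.swap)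
  finally show ?thesis .
qed

lemma unitary_cinner:
  assumes "unitary_mat U"
  shows "cinner (U *v x) (U *v y) = cinner x y"
  using assms by (simp add: cinner_adj unitary_mat_def matrix_vector_mul_assoc)

lemma unitary_inv_mv:
  assumes "unitary_mat U"
  shows "adjoint_mat U *v (U *v x) = x"
  using assms by (simp add: unitary_mat_def matrix_vector_mul_assoc)

lemma unitary_trace:
  assumes "unitary_mat U"
  shows "trace (U ** X ** adjoint_mat U) = trace X"
proof -
  have "trace (U ** X ** adjoint_mat U) = trace (adjoint_mat U ** (U ** X))" by (rule trace_mul_sym)
  also have "\<dots> = trace X" using assms by (simp add: unitary_mat_def matrix_mul_assoc)
  finally show ?thesis .
qed

lemma trace_ketbra_self: "trace (ketbra x y) = cinner y x"
  by (simp add: trace_def ketbra_def cinner_def mult.commute)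

lemma trace_specv:
  assumes "orthonormal_family v"
  shows "trace (specv c v) = complex_of_real (\<Sum>i\<in>UNIV. c i)"
  using assms by (simp add: specv_def trace_sum trace_scaleR trace_ketbra_self orthonormal_family_def scaleR_cpx)

lemma specv_eigen:
  assumes "orthonormal_family v"
  shows "eigen_decomp (specv c v) v c"
  using assms by (simp add: eigen_decomp_def specv_mv smult_ofreal)

lemma scaleR_specv: "r *\<^sub>R specv c v = specv (\<lambda>i. r * c i) v"
  by (simp add: specv_def scaleR_sum_right)

lemma eigen_scale:
  assumes "eigen_decomp H v l"
  shows "eigen_decomp (r *\<^sub>R H) v (\<lambda>i. r * l i)"
  using assms by (auto simp: eigen_decomp_def mv_scaleR_mat smult_ofreal[symmetric] vector_smult_assoc)

lemma trace_mm_specv: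
  "trace (X ** specv c u) = (\<Sum>j\<in>UNIV. complex_of_real (c j) * cinner (u j) (X *v u j))"
  by (simp add: specv_def mm_sum_right mm_scaleR_right trace_sum trace_scaleR trace_ketbra scaleR_cpx)

lemma gibbs_facts:
  assumes ev: "eigen_decomp H v l"
  shows "partition_fn \<beta> H = (\<Sum>i\<in>UNIV. exp (- \<beta> * l i))"
    and "gibbs \<beta> H = specv (\<lambda>i. exp (- \<beta> * l i) / (\<Sum>i\<in>UNIV. exp (- \<beta> * l i))) v"
proof -
  have ov: "orthonormal_family v" using ev by (simp add: eigen_decomp_def)
  have me: "mat_exp ((- \<beta>) *\<^sub>R H) = specv (\<lambda>i. exp (- \<beta> * l i)) v"
    unfolding mat_exp_def using mat_fun_eq[OF eigen_scale[OF ev, of "- \<beta>"], of exp] by simp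
  show pf: "partition_fn \<beta> H = (\<Sum>i\<in>UNIV. exp (- \<beta> * l i))"
    unfolding partition_fn_def me trace_specv[OF ov] by simp
  show "gibbs \<beta> H = specv (\<lambda>i. exp (- \<beta> * l i) / (\<Sum>i\<in>UNIV. exp (- \<beta> * l i))) v"
    unfolding gibbs_def pf me scaleR_specv by simp
qed


lemma Re_scaleR_cpx: "Re (r *\<^sub>R (z::complex)) = r * Re z" by simp

lemma sum_prod_split:
  "(\<Sum>j\<in>(UNIV::('a::finite\<times>'b::finite) set). (a (fst j) + b (snd j)) * (p (fst j) * q (snd j)))
   = (\<Sum>i\<in>UNIV. a i * p i) * (\<Sum>k\<in>UNIV. q k) + (\<Sum>i\<in>UNIV. p i) * (\<Sum>k\<in>UNIV. b k * (q k::real))"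
proof -
  have "(\<Sum>j\<in>(UNIV::('a\<times>'b) set). (a (fst j) + b (snd j)) * (p (fst j) * q (snd j)))
      = (\<Sum>i\<in>UNIV. \<Sum>k\<in>UNIV. a i * p i * q k + p i * (b k * q k))"
    by (simp add: sum_UNIV_prod algebra_simps)
  also have "\<dots> = (\<Sum>i\<in>UNIV. a i * p i * (\<Sum>k\<in>UNIV. q k) + p i * (\<Sum>k\<in>UNIV. b k * q k))"
    by (simp add: sum.distrib sum_distrib_left)
  also have "\<dots> = (\<Sum>i\<in>UNIV. a i * p i) * (\<Sum>k\<in>UNIV. q k) + (\<Sum>i\<in>UNIV. p i) * (\<Sum>k\<in>UNIV. b k * (q k::real))"
    by (simp add: sum.distrib sum_distrib_right)
  finally show ?thesis .
qed

lemma kron_eigen: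
  assumes "eigen_decomp A v l" "eigen_decomp B w m"
  shows "eigen_decomp (kron A B) (\<lambda>p. tv (v (fst p)) (w (snd p))) (\<lambda>p. l (fst p) * m (snd p))"
  using assms orth_tv[of v w] unfolding eigen_decomp_def
  by (auto simp: kron_tv tv_smult_left tv_smult_right vector_smult_assoc mult.commute)

lemma ofreal2: "complex_of_real a * complex_of_real b *s x = (a*b) *\<^sub>R x"
  by (simp add: vec_eq_iff scaleR_cpx)

lemma M_eigen:
  assumes "eigen_decomp A v l" "eigen_decomp B w m"
  shows "eigen_decomp (a *\<^sub>R kron A (mat 1) + a *\<^sub>R kron (mat 1) B + c *\<^sub>R mat 1)
           (\<lambda>p. tv (v (fst p)) (w (snd p))) (\<lambda>p. a * l (fst p) + a * m (snd p) + c)"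
proof -
  have ev: "A *v v i = l i *\<^sub>R v i" "B *v w k = m k *\<^sub>R w k" for i k
    using assms unfolding eigen_decomp_def by (auto simp: smult_ofreal)
  show ?thesis
    using assms orth_tv[of v w] unfolding eigen_decomp_def
    by (auto simp: kron_tv matrix_vector_mult_add_rdistrib mv_scaleR_mat ev tv_scaleR_left
        tv_scaleR_right smult_ofreal ofreal2 algebra_simps)
qed

lemma trace_sum_scaled: "trace ((\<Sum>i\<in>UNIV. p i *\<^sub>R (R i::complex^'n^'n)) ** K) = (\<Sum>i\<in>UNIV. p i *\<^sub>R trace (R i ** K))"
  by (simp add: mm_sum_left mm_scaleR_left trace_sum trace_scaleR)

lemma theta_eigen:
  assumes U: "unitary_mat U" and oe: "orthonormal_family e" and ow: "orthonormal_family w"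
  shows "eigen_decomp (\<Sum>i\<in>UNIV. p i *\<^sub>R (U ** kron (ketbra (e i) (e i)) (specv q w) ** adjoint_mat U))
           (\<lambda>j. U *v tv (e (fst j)) (w (snd j))) (\<lambda>j. p (fst j) * q (snd j))"
proof -
  have orth: "orthonormal_family (\<lambda>j. U *v tv (e (fst j)) (w (snd j)))"
    using orth_tv[OF oe ow] unfolding orthonormal_family_def by (simp add: unitary_cinner[OF U])
  have Ri: "(U ** kron (ketbra (e i) (e i)) (specv q w) ** adjoint_mat U) *v (U *v tv (e j) (w k))
      = (if i = j then q k *\<^sub>R (U *v tv (e j) (w k)) else 0)" for i j k
  proof -
    have "(U ** kron (ketbra (e i) (e i)) (specv q w) ** adjoint_mat U) *v (U *v tv (e j) (w k))
        = U *v (kron (ketbra (e i) (e i)) (specv q w) *v tv (e j) (w k))"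
      by (simp add: matrix_vector_mul_assoc[symmetric] unitary_inv_mv[OF U])
    also have "\<dots> = U *v tv (cinner (e i) (e j) *s e i) (q k *\<^sub>R w k)"
      by (simp add: kron_tv ketbra_mv specv_mv[OF ow])
    also have "\<dots> = (if i = j then q k *\<^sub>R (U *v tv (e j) (w k)) else 0)"
      using oe unfolding orthonormal_family_def
      by (simp add: tv_scaleR_right mv_scaleR tv_smult_left)
    finally show ?thesis .
  qed
  show ?thesis
    unfolding eigen_decomp_def
  proof (intro conjI orth allI)
    fix jk :: "'a \<times> 'b"
    obtain j k where jk: "jk = (j, k)" by (cases jk)
    have "(\<Sum>i\<in>UNIV. p i *\<^sub>R (U ** kron (ketbra (e i) (e i)) (specv q w) ** adjoint_mat U)) *v (U *v tv (e j) (w k))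
        = (\<Sum>i\<in>UNIV. p i *\<^sub>R (if i = j then q k *\<^sub>R (U *v tv (e j) (w k)) else 0))"
      by (simp add: mv_sum mv_scaleR_mat Ri)
    also have "\<dots> = (p j * q k) *\<^sub>R (U *v tv (e j) (w k))"
      by (simp add: if_distrib cong: if_cong)
    finally show "(\<Sum>i\<in>UNIV. p i *\<^sub>R (U ** kron (ketbra (e i) (e i)) (specv q w) ** adjoint_mat U)) *v
        (U *v tv (e (fst jk)) (w (snd jk))) = complex_of_real (p (fst jk) * q (snd jk)) *s (U *v tv (e (fst jk)) (w (snd jk)))"
      by (simp add: jk ofreal2)
  qed
qed


theorem theorem1:
  fixes H0 Ht :: "complex^'s::finite^'s"
    and HB :: "complex^'b::finite^'b"
    and U :: "complex^('s \<times> 'b)^('s \<times> 'b)"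
    and e :: "'s \<Rightarrow> complex^'s" and eps :: "'s \<Rightarrow> real"
    and \<beta> :: real
  assumes "hermitian H0" and "hermitian Ht" and "hermitian HB"
    and "unitary_mat U"
    and "\<beta> > 0"
    and "eigen_decomp H0 e eps"
  shows
    "let \<tau>B = gibbs \<beta> HB;
         \<Phi> = channel U \<tau>B;
         Et = (\<lambda>i. Re (trace (Ht ** \<Phi> (ketbra (e i) (e i)))));
         \<Delta>E = (\<lambda>i. Et i - eps i);
         Zt' = (\<Sum>i\<in>UNIV. exp (- \<beta> * Et i));
         \<Theta> = (\<Sum>i\<in>UNIV. (exp (- \<beta> * Et i) / Zt') *\<^sub>R
                   (U ** kron (ketbra (e i) (e i)) \<tau>B ** adjoint_mat U));
         Q = Re (trace (HB ** \<tau>B)) - Re (trace (kron (mat 1) HB ** \<Theta>));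
         W = (\<lambda>i. \<Delta>E i - Q);
         \<Delta>F = free_energy \<beta> Ht - free_energy \<beta> H0
     in (\<Sum>i\<in>UNIV. exp (- \<beta> * eps i) / partition_fn \<beta> H0 * exp (- \<beta> * W i))
        = exp (- \<beta> * \<Delta>F) * exp (- rel_entropy \<Theta> (kron (gibbs \<beta> Ht) \<tau>B))"
proof -
  note U = assms(4) and bpos = assms(5) and ev0 = assms(6)
  obtain v l where evt: "eigen_decomp Ht v l" using spectral_exists[OF assms(2)] by blast
  obtain w m where evb: "eigen_decomp HB w m" using spectral_exists[OF assms(3)] by blast
  have oe: "orthonormal_family e" using ev0 by (simp add: eigen_decomp_def)
  have ov: "orthonormal_family v" using evt by (simp add: eigen_decomp_def)
  have ow: "orthonormal_family w" using evb by (simp add: eigen_decomp_def)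
  define Z0 where "Z0 = (\<Sum>i\<in>UNIV. exp (- \<beta> * eps i))"
  define Zt where "Zt = (\<Sum>i\<in>UNIV. exp (- \<beta> * l i))"
  define ZB where "ZB = (\<Sum>i\<in>UNIV. exp (- \<beta> * m i))"
  have Z0p: "Z0 > 0" unfolding Z0_def by (intro sum_pos) auto
  have Ztp: "Zt > 0" unfolding Zt_def by (intro sum_pos) auto
  have ZBp: "ZB > 0" unfolding ZB_def by (intro sum_pos) auto
  define q where "q k = exp (- \<beta> * m k) / ZB" for k
  define pt where "pt i = exp (- \<beta> * l i) / Zt" for i
  have qp: "q k > 0" for k using ZBp by (simp add: q_def)
  have ptp: "pt i > 0" for i using Ztp by (simp add: pt_def)
  have sumq: "(\<Sum>k\<in>UNIV. q k) = 1" using ZBp by (simp add: q_def sum_divide_distrib[symmetric] ZB_def)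
  have pf0: "partition_fn \<beta> H0 = Z0" using gibbs_facts(1)[OF ev0] by (simp add: Z0_def)
  have pft: "partition_fn \<beta> Ht = Zt" using gibbs_facts(1)[OF evt] by (simp add: Zt_def)
  have gt: "gibbs \<beta> Ht = specv pt v" using gibbs_facts(2)[OF evt, of \<beta>] by (simp add: pt_def[abs_def] Zt_def)
  have gb: "gibbs \<beta> HB = specv q w" using gibbs_facts(2)[OF evb, of \<beta>] by (simp add: q_def[abs_def] ZB_def)

  define \<tau>B where "\<tau>B = gibbs \<beta> HB"
  define \<Phi> where "\<Phi> = channel U \<tau>B"
  define Et where "Et i = Re (trace (Ht ** \<Phi> (ketbra (e i) (e i))))" for i
  define Zt' where "Zt' = (\<Sum>i\<in>UNIV. exp (- \<beta> * Et i))"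
  define R where "R i = U ** kron (ketbra (e i) (e i)) \<tau>B ** adjoint_mat U" for i
  define p where "p i = exp (- \<beta> * Et i) / Zt'" for i
  define \<Theta> where "\<Theta> = (\<Sum>i\<in>UNIV. p i *\<^sub>R R i)"
  define X where "X = Re (trace (kron (mat 1) HB ** \<Theta>))"
  define Y where "Y = Re (trace (HB ** \<tau>B))"
  define Q where "Q = Y - X"
  define \<Delta>F where "\<Delta>F = free_energy \<beta> Ht - free_energy \<beta> H0"
  have Ztp': "Zt' > 0" unfolding Zt'_def by (intro sum_pos) auto
  have pp: "p i > 0" for i using Ztp' by (simp add: p_def)
  have sump: "(\<Sum>i\<in>UNIV. p i) = 1" using Ztp' by (simp add: p_def sum_divide_distrib[symmetric] Zt'_def)

  define u where "u j = U *v tv (e (fst j)) (w (snd j))" for j :: "'s \<times> 'b"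
  have evTh: "eigen_decomp \<Theta> u (\<lambda>j. p (fst j) * q (snd j))"
    unfolding \<Theta>_def R_def \<tau>B_def gb u_def by (rule theta_eigen[OF U oe ow])
  have A1: "Re (trace (\<Theta> ** mat_ln \<Theta>)) = - \<beta> * (\<Sum>i\<in>UNIV. Et i * p i) - ln Zt' - \<beta> * Y - ln ZB"
  proof -
    have ou: "orthonormal_family u" using evTh by (simp add: eigen_decomp_def)
    have Thu: "\<Theta> *v u j = complex_of_real (p (fst j) * q (snd j)) *s u j" for j
      using evTh unfolding eigen_decomp_def by blast
    have uu: "cinner (u j) (u j) = 1" for j using ou unfolding orthonormal_family_def by metis
    have "Re (trace (\<Theta> ** mat_ln \<Theta>)) =
        (\<Sum>j\<in>UNIV. ln (p (fst j) * q (snd j)) * (p (fst j) * q (snd j)))"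
      unfolding mat_ln_def mat_fun_eq[OF evTh] trace_mm_specv
      by (simp add: Thu cinner_smult_right uu)
    also have "\<dots> = (\<Sum>j\<in>UNIV. ((- \<beta> * Et (fst j) - ln Zt') + (- \<beta> * m (snd j) - ln ZB)) * (p (fst j) * q (snd j)))"
    proof (intro sum.cong refl)
      fix j :: "'s \<times> 'b"
      have "ln (p (fst j) * q (snd j)) = ln (p (fst j)) + ln (q (snd j))"
        using pp[of "fst j"] qp[of "snd j"] by (simp add: ln_mult)
      also have "\<dots> = (- \<beta> * Et (fst j) - ln Zt') + (- \<beta> * m (snd j) - ln ZB)"
        using Ztp' ZBp by (simp add: p_def q_def ln_div)
      finally show "ln (p (fst j) * q (snd j)) * (p (fst j) * q (snd j)) =
          ((- \<beta> * Et (fst j) - ln Zt') + (- \<beta> * m (snd j) - ln ZB)) * (p (fst j) * q (snd j))" by simp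
    qed
    also have "\<dots> = (\<Sum>i\<in>UNIV. (- \<beta> * Et i - ln Zt') * p i) + (\<Sum>k\<in>UNIV. (- \<beta> * m k - ln ZB) * q k)"
      using sum_prod_split[of "\<lambda>i. - \<beta> * Et i - ln Zt'" "\<lambda>k. - \<beta> * m k - ln ZB" p q] sump sumq
      by simp
    also have "(\<Sum>i\<in>UNIV. (- \<beta> * Et i - ln Zt') * p i) = - \<beta> * (\<Sum>i\<in>UNIV. Et i * p i) - ln Zt'"
      by (simp add: algebra_simps sum_subtractf sum_negf sump flip: sum_distrib_left)
    also have "(\<Sum>k\<in>UNIV. (- \<beta> * m k - ln ZB) * q k) = - \<beta> * (\<Sum>k\<in>UNIV. m k * q k) - ln ZB"
      by (simp add: algebra_simps sum_subtractf sum_negf sumq flip: sum_distrib_left)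
    also have "(\<Sum>k\<in>UNIV. m k * q k) = Y"
    proof -
      have Hw: "HB *v w k = complex_of_real (m k) *s w k" for k using evb by (simp add: eigen_decomp_def)
      have "Y = (\<Sum>k\<in>UNIV. q k * m k)"
        unfolding Y_def \<tau>B_def gb trace_mm_specv
        using ow by (simp add: Hw cinner_smult_right orthonormal_family_def)
      then show ?thesis by (simp add: mult.commute)
    qed
    finally show ?thesis by simp
  qed
  have A2: "Re (trace (\<Theta> ** mat_ln (kron (gibbs \<beta> Ht) \<tau>B))) = - \<beta> * (\<Sum>i\<in>UNIV. Et i * p i) - \<beta> * X - (ln Zt + ln ZB)"
  proof -
    define tw where "tw j = tv (v (fst j)) (w (snd j))" for j :: "'s \<times> 'b"
    define M where "M = (- \<beta>) *\<^sub>R kron Ht (mat 1) + (- \<beta>) *\<^sub>R kron (mat 1) HB + (- (ln Zt + ln ZB)) *\<^sub>R (mat 1 :: complex^('s\<times>'b)^('s\<times>'b))"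
    have evs: "eigen_decomp (kron (gibbs \<beta> Ht) \<tau>B) tw (\<lambda>j. pt (fst j) * q (snd j))"
      unfolding gt \<tau>B_def gb tw_def
      by (rule kron_eigen[OF specv_eigen[OF ov] specv_eigen[OF ow]])
    have evM: "eigen_decomp M tw (\<lambda>j. - \<beta> * l (fst j) + - \<beta> * m (snd j) + - (ln Zt + ln ZB))"
      unfolding M_def tw_def by (rule M_eigen[OF evt evb])
    have "mat_ln (kron (gibbs \<beta> Ht) \<tau>B) = specv (\<lambda>j. ln (pt (fst j) * q (snd j))) tw"
      unfolding mat_ln_def by (rule mat_fun_eq[OF evs])
    also have "\<dots> = specv (\<lambda>j. - \<beta> * l (fst j) + - \<beta> * m (snd j) + - (ln Zt + ln ZB)) tw"
    proof -
      have "ln (pt (fst j) * q (snd j)) = - \<beta> * l (fst j) + - \<beta> * m (snd j) + - (ln Zt + ln ZB)" for j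
        using ptp[of "fst j"] qp[of "snd j"] Ztp ZBp by (simp add: ln_mult pt_def q_def ln_div)
      then show ?thesis by simp
    qed
    also have "\<dots> = M" using spectral_sum[OF evM] by simp
    finally have lnsig: "mat_ln (kron (gibbs \<beta> Ht) \<tau>B) = M" .
    have t1: "Re (trace (\<Theta> ** kron Ht (mat 1))) = (\<Sum>i\<in>UNIV. Et i * p i)"
    proof -
      have "trace (R i ** kron Ht (mat 1)) = trace (Ht ** \<Phi> (ketbra (e i) (e i)))" for i
        unfolding trace_ptrace R_def \<Phi>_def channel_def ..
      then show ?thesis
        unfolding \<Theta>_def trace_sum_scaled by (simp add: Et_def mult.commute)
    qed
    have trtau: "trace \<tau>B = 1" unfolding \<tau>B_def gb trace_specv[OF ow] sumq by simp
    have t3: "Re (trace (\<Theta> ** mat 1)) = 1"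
    proof -
      have "trace (R i ** mat 1) = 1" for i
        using oe unfolding R_def
        by (simp add: unitary_trace[OF U] trace_kron trace_ketbra_self trtau orthonormal_family_def)
      then show ?thesis unfolding \<Theta>_def trace_sum_scaled by (simp add: sump)
    qed
    have t2: "Re (trace (\<Theta> ** kron (mat 1) HB)) = X"
      unfolding X_def by (subst trace_mul_sym) (rule refl)
    have e: "trace (\<Theta> ** M) = (- \<beta>) *\<^sub>R trace (\<Theta> ** kron Ht (mat 1)) + (- \<beta>) *\<^sub>R trace (\<Theta> ** kron (mat 1) HB)
        + (- (ln Zt + ln ZB)) *\<^sub>R trace (\<Theta> ** mat 1)"
      unfolding M_def by (simp only: matrix_add_ldistrib mm_scaleR_right trace_add trace_scaleR)
    have e2: "Re (trace (\<Theta> ** M)) = (- \<beta>) * Re (trace (\<Theta> ** kron Ht (mat 1))) + (- \<beta>) * Re (trace (\<Theta> ** kron (mat 1) HB))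
        + (- (ln Zt + ln ZB)) * Re (trace (\<Theta> ** mat 1))"
      unfolding e by (simp only: plus_complex.sel Re_scaleR_cpx)
    show ?thesis
      unfolding lnsig e2 t1 t2 t3 by simp
  qed
  have D: "rel_entropy \<Theta> (kron (gibbs \<beta> Ht) \<tau>B) = - ln Zt' - \<beta> * Q + ln Zt"
    unfolding rel_entropy_def A1 A2 Q_def by (simp add: algebra_simps)
  have final: "(\<Sum>i\<in>UNIV. exp (- \<beta> * eps i) / partition_fn \<beta> H0 * exp (- \<beta> * (Et i - eps i - Q)))
        = exp (- \<beta> * \<Delta>F) * exp (- rel_entropy \<Theta> (kron (gibbs \<beta> Ht) \<tau>B))"
  proof -
    have "(\<Sum>i\<in>UNIV. exp (- \<beta> * eps i) / partition_fn \<beta> H0 * exp (- \<beta> * (Et i - eps i - Q)))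
        = (\<Sum>i\<in>UNIV. exp (- \<beta> * Et i) * exp (\<beta> * Q) / Z0)"
    proof (intro sum.cong refl)
      fix i
      have "exp (- \<beta> * eps i) * exp (- \<beta> * (Et i - eps i - Q)) = exp (- \<beta> * Et i) * exp (\<beta> * Q)"
        by (simp add: exp_add[symmetric] algebra_simps)
      then show "exp (- \<beta> * eps i) / partition_fn \<beta> H0 * exp (- \<beta> * (Et i - eps i - Q)) = exp (- \<beta> * Et i) * exp (\<beta> * Q) / Z0"
        by (simp add: pf0)
    qed
    also have "\<dots> = Zt' * exp (\<beta> * Q) / Z0"
      by (simp add: Zt'_def sum_divide_distrib[symmetric] sum_distrib_right[symmetric])
    also have "\<dots> = exp (ln Zt - ln Z0) * exp (ln Zt' + \<beta> * Q - ln Zt)"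
      using Ztp Z0p Ztp' by (simp add: exp_diff exp_add)
    also have "ln Zt - ln Z0 = - \<beta> * \<Delta>F"
      using bpos unfolding \<Delta>F_def free_energy_def pft pf0 by (simp add: field_simps)
    also have "ln Zt' + \<beta> * Q - ln Zt = - rel_entropy \<Theta> (kron (gibbs \<beta> Ht) \<tau>B)"
      unfolding D by simp
    finally show ?thesis .
  qed
  show ?thesis
    unfolding Let_def
    using final
    unfolding \<Delta>F_def Q_def X_def Y_def \<Theta>_def p_def R_def Zt'_def Et_def \<Phi>_def \<tau>B_def .
qed

end
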